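(* Let $H$ be a complex-valued harmonic function in $\mathbb{D}=\{|z|<1\}$ and let $u(z)=H(z)+\frac12(1-|z|^{2})\big(zH_z(z)+\overline{z}H_{\overline{z}}(z)\big)$. If $u$ maps $\mathbb{D}$ into $\mathbb{D}$, then there exists a constant $c$ with $0<c<\infty$ such that $$(1-|z|^{2})\big(|u_z(z)|+|u_{\overline{z}}(z)|\big)\le c\quad\text{for all } z\in\mathbb{D};$$ that is, $u$ is a Bloch function. *)

theory Defs
  imports "HOL-Analysis.Analysis"
begin

definition dx :: "(complex \<Rightarrow> complex) \<Rightarrow> complex \<Rightarrow> complex" where
  "dx f z = frechet_derivative f (at z) 1"

definition dy :: "(complex \<Rightarrow> complex) \<Rightarrow> complex \<Rightarrow> complex" where
  "dy f z = frechet_derivative f (at z) \<i>"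

definition dz :: "(complex \<Rightarrow> complex) \<Rightarrow> complex \<Rightarrow> complex" where
  "dz f z = (dx f z - \<i> * dy f z) / 2"

definition dzbar :: "(complex \<Rightarrow> complex) \<Rightarrow> complex \<Rightarrow> complex" where
  "dzbar f z = (dx f z + \<i> * dy f z) / 2"

definition harmonic_on :: "(complex \<Rightarrow> complex) \<Rightarrow> complex set \<Rightarrow> bool" where
  "harmonic_on H S \<longleftrightarrow> open S \<and>
     (\<forall>z\<in>S. H differentiable (at z)) \<and>
     (\<forall>z\<in>S. dx H differentiable (at z) \<and> dy H differentiable (at z)) \<and>
     continuous_on S (dx (dx H)) \<and> continuous_on S (dy (dx H)) \<and>
     continuous_on S (dx (dy H)) \<and> continuous_on S (dy (dy H)) \<and>
     (\<forall>z\<in>S. dx (dx H) z + dy (dy H) z = 0)"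

end

theory Submission
  imports Defs "HOL-Complex_Analysis.Complex_Analysis"
begin


lemma line_bound:
  fixes f f' :: "real \<Rightarrow> complex"
  assumes T: "0 \<le> T" and d: "\<And>t. t\<in>{0..T} \<Longrightarrow> (f has_vector_derivative f' t) (at t)"
    and b: "\<And>t. t\<in>{0..T} \<Longrightarrow> norm (f' t - C) \<le> \<epsilon>"
  shows "norm (f T - f 0 - of_real T * C) \<le> T * \<epsilon>"
proof (cases "T = 0")
  case True then show ?thesis by simp
next
  case False
  then have T0: "0 < T" using T by simp
  define g where "g t = f t - of_real t * C" for t
  have gd: "(g has_derivative (\<lambda>d. d *\<^sub>R (f' t - C))) (at t)" if "t \<in> {0..T}" for t
  proof -
    have "(g has_vector_derivative (f' t - C)) (at t)"
      unfolding g_def using d[OF that]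
      by (auto intro!: derivative_eq_intros simp: has_vector_derivative_def scaleR_conv_of_real algebra_simps fun_eq_iff)
    then show ?thesis by (simp add: has_vector_derivative_def)
  qed
  have cont: "continuous_on {0..T} g"
    by (meson gd has_derivative_continuous continuous_at_imp_continuous_on)
  obtain x where x: "x \<in> {0<..<T}" "norm (g T - g 0) \<le> norm ((T - 0) *\<^sub>R (f' x - C))"
    using mvt_general[OF T0 cont, of "\<lambda>t d. d *\<^sub>R (f' t - C)"] gd by auto
  have "norm ((T - 0) *\<^sub>R (f' x - C)) \<le> T * \<epsilon>"
    using b[of x] x(1) T0 by (simp add: mult_left_mono)
  then show ?thesis using x(2) by (simp add: g_def algebra_simps)
qed

lemma dir_deriv:
  fixes H :: "complex \<Rightarrow> complex"
  assumes "H differentiable (at (p + of_real t * e))"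
  shows "((\<lambda>t. H (p + of_real t * e)) has_vector_derivative
           frechet_derivative H (at (p + of_real t * e)) e) (at t)"
proof -
  let ?D = "frechet_derivative H (at (p + of_real t * e))"
  have hd: "(H has_derivative ?D) (at (p + of_real t * e))"
    using assms frechet_derivative_works by blast
  have ld: "((\<lambda>t. p + of_real t * e) has_derivative (\<lambda>d. of_real d * e)) (at t)"
    by (auto intro!: derivative_eq_intros)
  have "((\<lambda>t. H (p + of_real t * e)) has_derivative (\<lambda>d. ?D (of_real d * e))) (at t)"
    using has_derivative_compose[OF ld hd] by (simp add: o_def)
  moreover have "?D (of_real d * e) = d *\<^sub>R ?D e" for d
    using has_derivative_linear[OF hd] by (metis linear_scale scaleR_conv_of_real)
  ultimately show ?thesis by (simp add: has_vector_derivative_def)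
qed

lemma dir_deriv_x:
  fixes H :: "complex \<Rightarrow> complex"
  assumes "H differentiable (at (z + of_real t + \<i> * of_real s))"
  shows "((\<lambda>t. H (z + of_real t + \<i> * of_real s)) has_vector_derivative
           dx H (z + of_real t + \<i> * of_real s)) (at t)"
proof -
  have e: "z + \<i> * of_real s + of_real t * 1 = z + of_real t + \<i> * of_real s" for t
    by (simp add: algebra_simps)
  show ?thesis using dir_deriv[of H "z + \<i> * of_real s" t 1] assms
    unfolding e dx_def by simp
qed

lemma dir_deriv_y:
  fixes H :: "complex \<Rightarrow> complex"
  assumes "H differentiable (at (z + of_real t + \<i> * of_real s))"
  shows "((\<lambda>s. H (z + of_real t + \<i> * of_real s)) has_vector_derivative
           dy H (z + of_real t + \<i> * of_real s)) (at s)"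
proof -
  have e: "z + of_real t + of_real s * \<i> = z + of_real t + \<i> * of_real s" for s
    by (simp add: algebra_simps)
  show ?thesis using dir_deriv[of H "z + of_real t" s "\<i>"] assms
    unfolding e dy_def by simp
qed

lemma clairaut:
  fixes H :: "complex \<Rightarrow> complex"
  assumes S: "open S" "z \<in> S"
    and d: "\<And>w. w\<in>S \<Longrightarrow> H differentiable (at w)"
    and dd: "\<And>w. w\<in>S \<Longrightarrow> dx H differentiable (at w) \<and> dy H differentiable (at w)"
    and c1: "continuous_on S (dy (dx H))" and c2: "continuous_on S (dx (dy H))"
  shows "dy (dx H) z = dx (dy H) z"
proof (rule ccontr)
  define A where "A = dy (dx H) z"
  define B where "B = dx (dy H) z"
  assume "dy (dx H) z \<noteq> dx (dy H) z"
  then have ne: "A \<noteq> B" by (simp add: A_def B_def)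
  define \<epsilon> where "\<epsilon> = cmod (A - B) / 3"
  have e0: "\<epsilon> > 0" using ne by (simp add: \<epsilon>_def)
  have ic1: "isCont (dy (dx H)) z" using c1 S continuous_on_eq_continuous_at by blast
  have ic2: "isCont (dx (dy H)) z" using c2 S continuous_on_eq_continuous_at by blast
  obtain d1 where d1: "d1 > 0" "\<And>w. dist w z < d1 \<Longrightarrow> dist (dy (dx H) w) A < \<epsilon>"
    using ic1 e0 unfolding continuous_at_eps_delta A_def by blast
  obtain d2 where d2: "d2 > 0" "\<And>w. dist w z < d2 \<Longrightarrow> dist (dx (dy H) w) B < \<epsilon>"
    using ic2 e0 unfolding continuous_at_eps_delta B_def by blast
  obtain d0 where d0: "d0 > 0" "ball z d0 \<subseteq> S" using S openE by blast
  define \<delta> where "\<delta> = min d0 (min d1 d2)"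
  define h where "h = \<delta> / 3"
  have h0: "h > 0" using d0 d1 d2 by (simp add: h_def \<delta>_def)
  define Q where "Q t s = z + of_real t + \<i> * of_real s" for t s
  have inR: "dist (Q t s) z < \<delta>" if "t\<in>{0..h}" "s\<in>{0..h}" for t s
  proof -
    have "dist (Q t s) z = cmod (of_real t + \<i> * of_real s)" by (simp add: Q_def dist_norm)
    also have "\<dots> \<le> cmod (of_real t) + cmod (\<i> * of_real s)" by (rule norm_triangle_ineq)
    also have "\<dots> \<le> 2 * h" using that by (simp add: norm_mult)
    also have "\<dots> < \<delta>" using h0 by (simp add: h_def)
    finally show ?thesis .
  qed
  have inS: "Q t s \<in> S" if "t\<in>{0..h}" "s\<in>{0..h}" for t s
    using inR[OF that] d0 by (auto simp: \<delta>_def dist_commute)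
  have bA: "norm (dy (dx H) (Q t s) - A) \<le> \<epsilon>" if "t\<in>{0..h}" "s\<in>{0..h}" for t s
    using d1(2)[of "Q t s"] inR[OF that] by (simp add: \<delta>_def dist_norm)
  have bB: "norm (dx (dy H) (Q t s) - B) \<le> \<epsilon>" if "t\<in>{0..h}" "s\<in>{0..h}" for t s
    using d2(2)[of "Q t s"] inR[OF that] by (simp add: \<delta>_def dist_norm)
  have kx: "cmod (dx H (Q t h) - dx H (Q t 0) - of_real h * A) \<le> h * \<epsilon>" if t: "t\<in>{0..h}" for t
  proof -
    have "cmod ((\<lambda>s. dx H (Q t s)) h - (\<lambda>s. dx H (Q t s)) 0 - of_real h * A) \<le> h * \<epsilon>"
    proof (rule line_bound[where f' = "\<lambda>s. dy (dx H) (Q t s)"])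
      show "0 \<le> h" using h0 by simp
      fix s assume s: "s \<in> {0..h}"
      show "((\<lambda>s. dx H (Q t s)) has_vector_derivative dy (dx H) (Q t s)) (at s)"
        using dir_deriv_y[of "dx H" z t s] dd[OF inS[OF t s]] unfolding Q_def by simp
      show "cmod (dy (dx H) (Q t s) - A) \<le> \<epsilon>" using bA[OF t s] .
    qed
    then show ?thesis by simp
  qed
  have ky: "cmod (dy H (Q h s) - dy H (Q 0 s) - of_real h * B) \<le> h * \<epsilon>" if s: "s\<in>{0..h}" for s
  proof -
    have "cmod ((\<lambda>t. dy H (Q t s)) h - (\<lambda>t. dy H (Q t s)) 0 - of_real h * B) \<le> h * \<epsilon>"
    proof (rule line_bound[where f' = "\<lambda>t. dx (dy H) (Q t s)"])
      show "0 \<le> h" using h0 by simp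
      fix t assume t: "t \<in> {0..h}"
      show "((\<lambda>t. dy H (Q t s)) has_vector_derivative dx (dy H) (Q t s)) (at t)"
        using dir_deriv_x[of "dy H" z t s] dd[OF inS[OF t s]] unfolding Q_def by simp
      show "cmod (dx (dy H) (Q t s) - B) \<le> \<epsilon>" using bB[OF t s] .
    qed
    then show ?thesis by simp
  qed
  have hin: "h \<in> {0..h}" "0 \<in> {0..h}" using h0 by auto
  have gx: "cmod ((H (Q h h) - H (Q h 0)) - (H (Q 0 h) - H (Q 0 0)) - of_real h * (of_real h * A)) \<le> h * (h * \<epsilon>)"
  proof -
    have "cmod ((\<lambda>t. H (Q t h) - H (Q t 0)) h - (\<lambda>t. H (Q t h) - H (Q t 0)) 0 - of_real h * (of_real h * A)) \<le> h * (h * \<epsilon>)"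
    proof (rule line_bound[where f' = "\<lambda>t. dx H (Q t h) - dx H (Q t 0)"])
      show "0 \<le> h" using h0 by simp
      fix t assume t: "t \<in> {0..h}"
      have "((\<lambda>t. H (Q t h)) has_vector_derivative dx H (Q t h)) (at t)"
        using dir_deriv_x[of H z t h] d[OF inS[OF t hin(1)]] unfolding Q_def by simp
      moreover have "((\<lambda>t. H (Q t 0)) has_vector_derivative dx H (Q t 0)) (at t)"
        using dir_deriv_x[of H z t 0] d[OF inS[OF t hin(2)]] unfolding Q_def by simp
      ultimately show "((\<lambda>t. H (Q t h) - H (Q t 0)) has_vector_derivative dx H (Q t h) - dx H (Q t 0)) (at t)"
        by (rule has_vector_derivative_diff)
      show "cmod (dx H (Q t h) - dx H (Q t 0) - of_real h * A) \<le> h * \<epsilon>" using kx[OF t] .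
    qed
    then show ?thesis by simp
  qed
  have gy: "cmod ((H (Q h h) - H (Q 0 h)) - (H (Q h 0) - H (Q 0 0)) - of_real h * (of_real h * B)) \<le> h * (h * \<epsilon>)"
  proof -
    have "cmod ((\<lambda>s. H (Q h s) - H (Q 0 s)) h - (\<lambda>s. H (Q h s) - H (Q 0 s)) 0 - of_real h * (of_real h * B)) \<le> h * (h * \<epsilon>)"
    proof (rule line_bound[where f' = "\<lambda>s. dy H (Q h s) - dy H (Q 0 s)"])
      show "0 \<le> h" using h0 by simp
      fix s assume s: "s \<in> {0..h}"
      have "((\<lambda>s. H (Q h s)) has_vector_derivative dy H (Q h s)) (at s)"
        using dir_deriv_y[of H z h s] d[OF inS[OF hin(1) s]] unfolding Q_def by simp
      moreover have "((\<lambda>s. H (Q 0 s)) has_vector_derivative dy H (Q 0 s)) (at s)"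
        using dir_deriv_y[of H z 0 s] d[OF inS[OF hin(2) s]] unfolding Q_def by simp
      ultimately show "((\<lambda>s. H (Q h s) - H (Q 0 s)) has_vector_derivative dy H (Q h s) - dy H (Q 0 s)) (at s)"
        by (rule has_vector_derivative_diff)
      show "cmod (dy H (Q h s) - dy H (Q 0 s) - of_real h * B) \<le> h * \<epsilon>" using ky[OF s] .
    qed
    then show ?thesis by simp
  qed
  define \<Delta> where "\<Delta> = (H (Q h h) - H (Q h 0)) - (H (Q 0 h) - H (Q 0 0))"
  have "of_real (h*h) * (A - B) = (\<Delta> - of_real h * (of_real h * B)) - (\<Delta> - of_real h * (of_real h * A))"
    by (simp add: algebra_simps)
  then have "h*h * cmod (A - B) = cmod ((\<Delta> - of_real h * (of_real h * B)) - (\<Delta> - of_real h * (of_real h * A)))"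
    using h0 by (metis norm_mult norm_of_real abs_of_pos mult_pos_pos)
  also have "\<dots> \<le> cmod (\<Delta> - of_real h * (of_real h * B)) + cmod (\<Delta> - of_real h * (of_real h * A))"
    by (rule norm_triangle_ineq4)
  also have "\<dots> \<le> h * (h * \<epsilon>) + h * (h * \<epsilon>)"
  proof -
    have "\<Delta> - of_real h * (of_real h * B) = (H (Q h h) - H (Q 0 h)) - (H (Q h 0) - H (Q 0 0)) - of_real h * (of_real h * B)"
      (is "_ = ?gy") by (simp add: \<Delta>_def algebra_simps)
    then have e1: "cmod (\<Delta> - of_real h * (of_real h * B)) \<le> h * (h * \<epsilon>)" using gy by (simp only:)
    have e2: "cmod (\<Delta> - of_real h * (of_real h * A)) \<le> h * (h * \<epsilon>)" using gx by (simp add: \<Delta>_def)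
    show ?thesis using e1 e2 by linarith
  qed
  finally have "h*h * cmod (A - B) \<le> (h*h) * (2*\<epsilon>)" by (simp add: algebra_simps)
  then have "cmod (A - B) \<le> 2 * \<epsilon>" using h0 by (simp add: mult_le_cancel_left_pos)
  then show False using e0 by (simp add: \<epsilon>_def)
qed



lemma lin_decomp:
  fixes D :: "complex \<Rightarrow> complex"
  assumes "linear D"
  shows "D v = of_real (Re v) * D 1 + of_real (Im v) * D \<i>"
proof -
  have "v = Re v *\<^sub>R 1 + Im v *\<^sub>R \<i>" by (simp add: complex_eq_iff)
  then have "D v = D (Re v *\<^sub>R 1 + Im v *\<^sub>R \<i>)" by simp
  also have "\<dots> = Re v *\<^sub>R D 1 + Im v *\<^sub>R D \<i>"
    using assms by (simp add: linear_add linear_scale)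
  finally show ?thesis by (simp add: scaleR_conv_of_real)
qed

lemma fd_lin:
  assumes "f differentiable (at z)"
  shows "(f has_derivative frechet_derivative f (at z)) (at z)"
    and "linear (frechet_derivative f (at z))"
  using assms frechet_derivative_works has_derivative_linear by blast+

lemma dz_holo:
  fixes H :: "complex \<Rightarrow> complex"
  assumes hH: "harmonic_on H S" and z: "z \<in> S"
  shows "(dz H has_field_derivative (dx (dx H) z - \<i> * dx (dy H) z) / 2) (at z)"
proof -
  have S: "open S" using hH by (simp add: harmonic_on_def)
  have d: "\<And>w. w\<in>S \<Longrightarrow> H differentiable (at w)"
    and dd: "\<And>w. w\<in>S \<Longrightarrow> dx H differentiable (at w) \<and> dy H differentiable (at w)"
    and c1: "continuous_on S (dy (dx H))" and c2: "continuous_on S (dx (dy H))"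
    and lap: "dx (dx H) z + dy (dy H) z = 0"
    using hH z by (auto simp: harmonic_on_def)
  have cl: "dy (dx H) z = dx (dy H) z" by (rule clairaut[OF S z d dd c1 c2])
  define D1 where "D1 = frechet_derivative (dx H) (at z)"
  define D2 where "D2 = frechet_derivative (dy H) (at z)"
  have h1: "(dx H has_derivative D1) (at z)" "linear D1"
    using fd_lin[of "dx H" z] dd[OF z] by (auto simp: D1_def)
  have h2: "(dy H has_derivative D2) (at z)" "linear D2"
    using fd_lin[of "dy H" z] dd[OF z] by (auto simp: D2_def)
  have v1: "D1 1 = dx (dx H) z" "D1 \<i> = dy (dx H) z" "D2 1 = dx (dy H) z" "D2 \<i> = dy (dy H) z"
    by (simp_all add: D1_def D2_def dx_def dy_def)
  have fe: "dz H = (\<lambda>w. (dx H w - \<i> * dy H w) / 2)" by (simp add: fun_eq_iff dz_def)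
  have "(dz H has_derivative (\<lambda>v. (D1 v - \<i> * D2 v) / 2)) (at z)"
    unfolding fe by (auto intro!: derivative_eq_intros h1 h2)
  moreover have "(\<lambda>v. (D1 v - \<i> * D2 v) / 2) = (\<lambda>v. ((dx (dx H) z - \<i> * dx (dy H) z) / 2) * v)"
  proof
    fix v
    have "D1 v = of_real (Re v) * dx (dx H) z + of_real (Im v) * dx (dy H) z"
      using lin_decomp[OF h1(2), of v] v1 cl by simp
    moreover have "D2 v = of_real (Re v) * dx (dy H) z - of_real (Im v) * dx (dx H) z"
    proof -
      have lap': "dy (dy H) z = - dx (dx H) z" using lap by (simp add: eq_neg_iff_add_eq_0 add.commute)
      show ?thesis using lin_decomp[OF h2(2), of v] v1 lap' by simp
    qed
    ultimately have "(D1 v - \<i> * D2 v) / 2 = (of_real (Re v) * dx (dx H) z + of_real (Im v) * dx (dy H) z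
        - \<i> * (of_real (Re v) * dx (dy H) z - of_real (Im v) * dx (dx H) z)) / 2" by simp
    also have "\<dots> = ((dx (dx H) z - \<i> * dx (dy H) z) / 2) * v"
      by (simp add: complex_eq_iff algebra_simps)
    finally show "(D1 v - \<i> * D2 v) / 2 = ((dx (dx H) z - \<i> * dx (dy H) z) / 2) * v" .
  qed
  ultimately show ?thesis unfolding has_field_derivative_def by (simp only:)
qed



lemma t0': fixes X Y :: complex and a b :: real
  shows "of_real a * X + of_real b * Y - (X - \<i> * Y) / 2 * (of_real a + \<i> * of_real b) = (of_real a - \<i> * of_real b) * ((X + \<i> * Y) / 2)"
proof -
  have "\<i> * \<i> = (-1::complex)" by simp
  then show ?thesis by algebra
qed
lemma key1: fixes X Y v :: complex
  shows "cnj (of_real (Re v) * X + of_real (Im v) * Y - (X - \<i> * Y) / 2 * v) = cnj ((X + \<i> * Y) / 2) * v"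
proof -
  have v: "of_real (Re v) + \<i> * of_real (Im v) = v" by (simp add: complex_eq_iff)
  have c: "of_real (Re v) - \<i> * of_real (Im v) = cnj v" by (simp add: complex_eq_iff)
  have "of_real (Re v) * X + of_real (Im v) * Y - (X - \<i> * Y) / 2 * v = cnj v * ((X + \<i> * Y) / 2)"
    using t0'[of "Re v" X "Im v" Y] unfolding v c .
  then show ?thesis by (metis complex_cnj_cnj complex_cnj_mult mult.commute)
qed
lemma decomp:
  fixes H :: "complex \<Rightarrow> complex"
  assumes hH: "harmonic_on H (ball 0 1)"
  obtains h g hp gp hpp gpp :: "complex \<Rightarrow> complex" where
    "\<And>w. w \<in> ball 0 1 \<Longrightarrow> (h has_field_derivative hp w) (at w)"
    "\<And>w. w \<in> ball 0 1 \<Longrightarrow> (hp has_field_derivative hpp w) (at w)"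
    "\<And>w. w \<in> ball 0 1 \<Longrightarrow> (g has_field_derivative gp w) (at w)"
    "\<And>w. w \<in> ball 0 1 \<Longrightarrow> (gp has_field_derivative gpp w) (at w)"
    "\<And>w. w \<in> ball 0 1 \<Longrightarrow> H w = h w + cnj (g w)"
    "\<And>w. w \<in> ball 0 1 \<Longrightarrow> dz H w = hp w"
    "\<And>w. w \<in> ball 0 1 \<Longrightarrow> dzbar H w = cnj (gp w)"
proof -
  let ?B = "ball (0::complex) 1"
  define hp where "hp = dz H"
  define hpp where "hpp w = (dx (dx H) w - \<i> * dx (dy H) w) / 2" for w
  have hpd: "(hp has_field_derivative hpp w) (at w)" if "w \<in> ?B" for w
    unfolding hp_def hpp_def by (rule dz_holo[OF hH that])
  have hpholo: "hp holomorphic_on ?B"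
    unfolding holomorphic_on_open[OF open_ball] using hpd by blast
  obtain h where h0: "\<And>x. x \<in> ?B \<Longrightarrow> (h has_field_derivative hp x) (at x within ?B)"
    by (rule holomorphic_convex_primitive'[OF convex_ball open_ball hpholo]) (rule that, assumption)
  have hd: "(h has_field_derivative hp x) (at x)" if "x \<in> ?B" for x
    using h0[OF that] by (simp add: at_within_open[OF that open_ball])
  define g where "g w = cnj (H w - h w)" for w
  define gp where "gp w = cnj (dzbar H w)" for w
  have dH: "\<And>w. w\<in>?B \<Longrightarrow> H differentiable (at w)" using hH by (simp add: harmonic_on_def)
  have gd: "(g has_field_derivative gp w) (at w)" if w: "w \<in> ?B" for w
  proof -
    define D where "D = frechet_derivative H (at w)"
    have HD: "(H has_derivative D) (at w)" "linear D" using fd_lin[OF dH[OF w]] by (auto simp: D_def)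
    have "(g has_derivative (\<lambda>v. cnj (D v - hp w * v))) (at w)"
      unfolding g_def using HD(1) hd[OF w]
      by (auto intro!: derivative_eq_intros simp: has_field_derivative_def)
    moreover have "(\<lambda>v. cnj (D v - hp w * v)) = (\<lambda>v. gp w * v)"
    proof
      fix v
      have "D v = of_real (Re v) * dx H w + of_real (Im v) * dy H w"
        using lin_decomp[OF HD(2), of v] by (simp add: dx_def dy_def D_def)
      then have "cnj (D v - hp w * v) = cnj (of_real (Re v) * dx H w + of_real (Im v) * dy H w
           - (dx H w - \<i> * dy H w) / 2 * v)" by (simp add: hp_def dz_def)
      also have "\<dots> = gp w * v"
        using key1[where X="dx H w" and Y="dy H w" and v=v] by (simp only: gp_def dzbar_def)
      finally show "cnj (D v - hp w * v) = gp w * v" .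
    qed
    ultimately show ?thesis unfolding has_field_derivative_def by (simp only:)
  qed
  have gholo: "g holomorphic_on ?B"
    unfolding holomorphic_on_open[OF open_ball] using gd by blast
  have gpholo: "gp holomorphic_on ?B"
  proof (rule holomorphic_transform[OF holomorphic_deriv[OF gholo open_ball]])
    fix x assume "x \<in> ?B" then show "deriv g x = gp x" using gd DERIV_imp_deriv by blast
  qed
  define gpp where "gpp = deriv gp"
  have gpd: "(gp has_field_derivative gpp w) (at w)" if "w \<in> ?B" for w
    unfolding gpp_def
    using holomorphic_on_imp_differentiable_at[OF gpholo open_ball that]
    by (simp add: DERIV_deriv_iff_field_differentiable)
  show ?thesis
  proof (rule that[of h hp hpp g gp gpp])
    fix w assume w: "w \<in> ?B"
    show "(h has_field_derivative hp w) (at w)" using hd[OF w] .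
    show "(hp has_field_derivative hpp w) (at w)" using hpd[OF w] .
    show "(g has_field_derivative gp w) (at w)" using gd[OF w] .
    show "(gp has_field_derivative gpp w) (at w)" using gpd[OF w] .
    show "H w = h w + cnj (g w)" by (simp add: g_def)
    show "dz H w = hp w" by (simp add: hp_def)
    show "dzbar H w = cnj (gp w)" by (simp add: gp_def)
  qed
qed



lemma ray_deriv:
  fixes f :: "complex \<Rightarrow> complex"
  assumes "(f has_field_derivative f') (at (of_real t * z))"
  shows "((\<lambda>t. f (of_real t * z)) has_vector_derivative (z * f')) (at t)"
proof -
  have ld: "((\<lambda>t. of_real t * z) has_derivative (\<lambda>d. of_real d * z)) (at t)"
    by (auto intro!: derivative_eq_intros)
  have hd: "(f has_derivative (\<lambda>v. f' * v)) (at (of_real t * z))"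
    using assms by (simp add: has_field_derivative_def)
  have "((\<lambda>t. f (of_real t * z)) has_derivative (\<lambda>d. f' * (of_real d * z))) (at t)"
    using has_derivative_compose[OF ld hd] by (simp add: o_def)
  moreover have "(\<lambda>d. f' * (of_real d * z)) = (\<lambda>d. d *\<^sub>R (z * f'))"
    by (simp add: fun_eq_iff scaleR_conv_of_real)
  ultimately show ?thesis by (simp add: has_vector_derivative_def)
qed

lemma R_deriv:
  fixes s t :: real
  assumes "s * t^2 < 1"
  shows "((\<lambda>t. t^2 / (1 - s * t^2)) has_real_derivative (2 * t / (1 - s * t^2)^2)) (at t)"
proof -
  have ne: "1 - s * t^2 \<noteq> 0" using assms by simp
  have "((\<lambda>t. t^2 / (1 - s * t^2)) has_real_derivative
        ((2 * t * (1 - s * t^2) - t^2 * (- (s * (2 * t)))) / (1 - s * t^2)^2)) (at t)"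
    using ne by (auto intro!: derivative_eq_intros simp: power2_eq_square)
  moreover have "(2 * t * (1 - s * t^2) - t^2 * (- (s * (2 * t)))) / (1 - s * t^2)^2 = 2 * t / (1 - s * t^2)^2"
    by (simp add: algebra_simps power2_eq_square)
  ultimately show ?thesis by (simp only:)
qed

lemma bound_H:
  fixes h g hp gp u :: "complex \<Rightarrow> complex"
  assumes hd: "\<And>w. w \<in> ball 0 1 \<Longrightarrow> (h has_field_derivative hp w) (at w)"
    and gd: "\<And>w. w \<in> ball 0 1 \<Longrightarrow> (g has_field_derivative gp w) (at w)"
    and ueq: "\<And>w. w \<in> ball 0 1 \<Longrightarrow> u w = h w + cnj (g w) + of_real ((1 - (norm w)\<^sup>2) / 2) * (w * hp w + cnj w * cnj (gp w))"
    and ub: "\<And>w. w \<in> ball 0 1 \<Longrightarrow> norm (u w) < 1"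
    and z: "z \<in> ball 0 1"
  shows "norm (h z + cnj (g z)) \<le> 1"
proof -
  define s where "s = (norm z)^2"
  have s0: "0 \<le> s" "s < 1" using z by (auto simp: s_def power_less_one_iff abs_square_less_1)
  define \<Phi> where "\<Phi> t = h (of_real t * z) + cnj (g (of_real t * z))" for t :: real
  define \<Phi>' where "\<Phi>' t = z * hp (of_real t * z) + cnj (z * gp (of_real t * z))" for t :: real
  define R where "R t = t^2 / (1 - s * t^2)" for t :: real
  define R' where "R' t = 2 * t / (1 - s * t^2)^2" for t :: real
  have inB: "of_real t * z \<in> ball 0 1" if "t \<in> {0..1}" for t
  proof -
    have "norm (of_real t * z) = \<bar>t\<bar> * norm z" by (simp add: norm_mult)
    also have "\<dots> \<le> norm z" using that by (auto intro: mult_left_le_one_le)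
    finally show ?thesis using z by simp
  qed
  have st: "s * t^2 < 1" if "t \<in> {0..1}" for t
  proof -
    have "t^2 \<le> 1" using that by (simp add: power_le_one)
    then have "s * t^2 \<le> s" using s0 by (simp add: mult_left_le)
    then show ?thesis using s0 by simp
  qed
  have \<Phi>d: "(\<Phi> has_vector_derivative \<Phi>' t) (at t)" if "t \<in> {0..1}" for t
  proof -
    have a: "((\<lambda>t. h (of_real t * z)) has_vector_derivative (z * hp (of_real t * z))) (at t)"
      by (rule ray_deriv[OF hd[OF inB[OF that]]])
    have b: "((\<lambda>t. g (of_real t * z)) has_vector_derivative (z * gp (of_real t * z))) (at t)"
      by (rule ray_deriv[OF gd[OF inB[OF that]]])
    show ?thesis unfolding \<Phi>_def \<Phi>'_def
      by (intro has_vector_derivative_add a has_vector_derivative_cnj b)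
  qed
  define \<psi> where "\<psi> t = R t *\<^sub>R \<Phi> t" for t
  define \<psi>' where "\<psi>' t = R t *\<^sub>R \<Phi>' t + R' t *\<^sub>R \<Phi> t" for t
  have \<psi>d: "(\<psi> has_vector_derivative \<psi>' t) (at t within {0..1})" if "t \<in> {0..1}" for t
  proof -
    have "(R has_real_derivative R' t) (at t within {0..1})"
      using R_deriv[OF st[OF that]] unfolding R_def[abs_def] R'_def by (rule has_field_derivative_at_within)
    then show ?thesis unfolding \<psi>_def[abs_def] \<psi>'_def
      using has_vector_derivative_at_within[OF \<Phi>d[OF that]] by (rule has_vector_derivative_scaleR)
  qed
  have Rd: "(R has_vector_derivative R' t) (at t within {0..1})" if "t \<in> {0..1}" for t
    using R_deriv[OF st[OF that]] unfolding R_def[abs_def] R'_def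
    by (simp add: has_real_derivative_iff_has_vector_derivative has_vector_derivative_at_within)
  have i1: "(\<psi>' has_integral (\<psi> 1 - \<psi> 0)) {0..1}"
    by (rule fundamental_theorem_of_calculus) (auto intro: \<psi>d)
  have i2: "(R' has_integral (R 1 - R 0)) {0..1}"
    by (rule fundamental_theorem_of_calculus) (auto intro: Rd)
  have \<psi>'eq: "\<psi>' t = R' t *\<^sub>R u (of_real t * z)" if "t \<in> {0..1}" for t
  proof -
    have ne: "1 - s * t^2 \<noteq> 0" using st[OF that] by simp
    have n2: "(norm (of_real t * z))^2 = t^2 * s" by (simp add: s_def norm_mult power_mult_distrib)
    have key: "R' t * ((1 - t^2 * s) / 2) * t = R t"
    proof -
      define a where "a = 1 - s * t^2"
      have a0: "a \<noteq> 0" using ne by (simp add: a_def)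
      have "(2 * t / a^2) * (a / 2) * t = t^2 / a" using a0 by (simp add: field_simps power2_eq_square)
      then show ?thesis by (simp add: R_def R'_def a_def mult.commute)
    qed
    have "u (of_real t * z) = \<Phi> t + of_real ((1 - t^2 * s) / 2) * (of_real t * \<Phi>' t)"
    proof -
      have u1: "u (of_real t * z) = \<Phi> t + of_real ((1 - t^2 * s) / 2) *
          (of_real t * z * hp (of_real t * z) + cnj (of_real t * z) * cnj (gp (of_real t * z)))"
        using ueq[OF inB[OF that], unfolded n2] by (simp add: \<Phi>_def)
      have u2: "of_real t * z * hp (of_real t * z) + cnj (of_real t * z) * cnj (gp (of_real t * z)) = of_real t * \<Phi>' t"
        by (simp add: \<Phi>'_def algebra_simps)
      show ?thesis using u1 unfolding u2 .
    qed
    then have "R' t *\<^sub>R u (of_real t * z) = R' t *\<^sub>R \<Phi> t + of_real (R' t * ((1 - t^2 * s) / 2) * t) * \<Phi>' t"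
      by (simp add: scaleR_conv_of_real algebra_simps)
    also have "\<dots> = \<psi>' t" unfolding key by (simp add: \<psi>'_def scaleR_conv_of_real)
    finally show ?thesis by simp
  qed
  have R'0: "0 \<le> R' t" if "t \<in> {0..1}" for t using that by (simp add: R'_def)
  have "norm (\<psi> 1 - \<psi> 0) \<le> (R 1 - R 0) \<bullet> 1"
  proof (rule has_integral_norm_bound_integral_component[OF i1 i2])
    fix t :: real assume t: "t \<in> {0..1}"
    have "norm (\<psi>' t) = R' t * norm (u (of_real t * z))"
      using \<psi>'eq[OF t] R'0[OF t] by simp
    also have "\<dots> \<le> R' t" using ub[OF inB[OF t]] R'0[OF t] by (simp add: mult_left_le)
    finally show "norm (\<psi>' t) \<le> R' t \<bullet> 1" by simp
  qed
  then have "norm (\<Phi> 1) / (1 - s) \<le> 1 / (1 - s)"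
    using s0 by (simp add: \<psi>_def R_def)
  then have "norm (\<Phi> 1) \<le> 1" using s0 by (simp add: divide_le_cancel)
  then show ?thesis by (simp add: \<Phi>_def)
qed



lemma reF_bound:
  fixes F F' F'' :: "complex \<Rightarrow> complex"
  assumes r: "r > 0"
    and d1: "\<And>w. w \<in> ball a r \<Longrightarrow> (F has_field_derivative F' w) (at w)"
    and d2: "\<And>w. w \<in> ball a r \<Longrightarrow> (F' has_field_derivative F'' w) (at w)"
    and re: "\<And>w. w \<in> ball a r \<Longrightarrow> \<bar>Re (F w)\<bar> \<le> 1"
  shows "norm (F' a) \<le> 18 / r \<and> norm (F'' a) \<le> 2988 / r^2"
proof -
  define G where "G w = exp (F w)" for w
  define G' where "G' w = F' w * exp (F w)" for w
  define G'' where "G'' w = F'' w * exp (F w) + F' w * (F' w * exp (F w))" for w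
  have a: "a \<in> ball a r" using r by simp
  have Gd: "(G has_field_derivative G' w) (at w)" if "w \<in> ball a r" for w
    unfolding G_def[abs_def] G'_def using d1[OF that]
    by (auto intro!: derivative_eq_intros simp: mult.commute)
  have G'd: "(G' has_field_derivative G'' w) (at w)" if "w \<in> ball a r" for w
    unfolding G'_def[abs_def] G''_def using d1[OF that] d2[OF that]
    by (auto intro!: derivative_eq_intros simp: algebra_simps)
  have dG: "deriv G w = G' w" if "w \<in> ball a r" for w using Gd[OF that] by (rule DERIV_imp_deriv)
  have ddG: "deriv (deriv G) a = G'' a"
  proof -
    have "(deriv G has_field_derivative G'' a) (at a)"
      by (rule has_field_derivative_transform_within_open[OF G'd[OF a] open_ball a]) (simp add: dG)
    then show ?thesis by (rule DERIV_imp_deriv)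
  qed
  have r2: "r/2 > 0" using r by simp
  have sub: "cball a (r/2) \<subseteq> ball a r" using r by (auto simp: subset_iff dist_norm)
  have holo: "G holomorphic_on ball a (r/2)"
    unfolding holomorphic_on_open[OF open_ball] using Gd sub by (meson ball_subset_cball subsetD)
  have cont: "continuous_on (cball a (r/2)) G"
  proof (rule continuous_at_imp_continuous_on, intro ballI)
    fix w assume "w \<in> cball a (r/2)"
    then have "w \<in> ball a r" using sub by auto
    then show "isCont G w" using Gd DERIV_isCont by blast
  qed
  have inb: "G w \<in> ball 0 3" if "w \<in> ball a (r/2)" for w
  proof -
    have "w \<in> ball a r" using that sub ball_subset_cball by blast
    then have "Re (F w) \<le> 1" using re by fastforce
    then have "exp (Re (F w)) \<le> exp 1" by simp
    also have "\<dots> < 3" using e_less_272 by simp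
    finally show ?thesis by (simp add: G_def)
  qed
  have b1: "norm ((deriv ^^ 1) G a) \<le> fact 1 * 3 / (r/2)^1"
    using Cauchy_higher_deriv_bound[OF holo cont inb r2, of 1] by simp
  have b2: "norm ((deriv ^^ 2) G a) \<le> fact 2 * 3 / (r/2)^2"
    using Cauchy_higher_deriv_bound[OF holo cont inb r2, of 2] by simp
  have nG'a: "norm (G' a) \<le> 6 / r" using b1 dG[OF a] by simp
  have nG''a: "norm (G'' a) \<le> 24 / r^2" using b2 ddG by (simp add: numeral_2_eq_2 power2_eq_square)
  have ea: "exp (Re (F a)) \<ge> 1/3"
  proof -
    have "Re (F a) \<ge> -1" using re[OF a] by simp
    then have "exp (Re (F a)) \<ge> exp (-1)" by simp
    moreover have "exp (-1::real) \<ge> 1/3" using exp_le by (simp add: exp_minus field_simps)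
    ultimately show ?thesis by linarith
  qed
  have ne: "norm (exp (F a)) = exp (Re (F a))" by simp
  have f1: "norm (F' a) \<le> 18 / r"
  proof -
    have "norm (F' a) * (1/3) \<le> norm (F' a) * exp (Re (F a))"
      by (rule mult_left_mono[OF ea]) simp
    also have "\<dots> = norm (G' a)" by (simp add: G'_def norm_mult)
    also have "\<dots> \<le> 6 / r" by (rule nG'a)
    finally show ?thesis by (simp add: field_simps)
  qed
  have "norm (F'' a) * (1/3) \<le> norm (F'' a) * exp (Re (F a))"
    by (rule mult_left_mono[OF ea]) simp
  also have "\<dots> = norm (G'' a - F' a * (F' a * exp (F a)))" by (simp add: G''_def norm_mult)
  also have "\<dots> \<le> norm (G'' a) + norm (F' a * (F' a * exp (F a)))" by (rule norm_triangle_ineq4)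
  also have "\<dots> \<le> 24 / r^2 + (18/r) * ((18/r) * 3)"
  proof -
    have "exp (Re (F a)) \<le> 3" using re[OF a] exp_le
    proof -
      have "Re (F a) \<le> 1" using re[OF a] by simp
      then have "exp (Re (F a)) \<le> exp 1" by simp
      then show ?thesis using exp_le by linarith
    qed
    then have "cmod (F' a) * (cmod (F' a) * exp (Re (F a))) \<le> (18/r) * ((18/r) * 3)"
      using f1 r by (intro mult_mono) auto
    then have "norm (F' a * (F' a * exp (F a))) \<le> (18/r) * ((18/r) * 3)"
      by (simp add: norm_mult)
    then show ?thesis using nG''a by linarith
  qed
  finally have "norm (F'' a) \<le> 3 * (24 / r^2 + (18/r) * ((18/r) * 3))" by simp
  also have "\<dots> = 2988 / r^2" by (simp add: field_simps power2_eq_square)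
  finally have "norm (F'' a) \<le> 2988 / r^2" .
  then show ?thesis using f1 by simp
qed



lemma dz_of:
  fixes f :: "complex \<Rightarrow> complex"
  assumes "(f has_derivative (\<lambda>v. A * v + B * cnj v)) (at z)"
  shows "dz f z = A" "dzbar f z = B"
proof -
  have fd: "frechet_derivative f (at z) = (\<lambda>v. A * v + B * cnj v)"
    using assms by (rule frechet_derivative_at[symmetric])
  have x: "dx f z = A + B" by (simp add: dx_def fd)
  have y: "dy f z = \<i> * A - \<i> * B" by (simp add: dy_def fd)
  show "dz f z = A" by (simp add: dz_def x y algebra_simps)
  show "dzbar f z = B" by (simp add: dzbar_def x y algebra_simps)
qed

lemma U_deriv:
  fixes h g hp gp hpp gpp :: "complex \<Rightarrow> complex"
  assumes hd: "(h has_field_derivative hp a) (at a)" and gd: "(g has_field_derivative gp a) (at a)"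
    and hpd: "(hp has_field_derivative hpp a) (at a)" and gpd: "(gp has_field_derivative gpp a) (at a)"
  defines "S \<equiv> a * hp a + cnj a * cnj (gp a)"
  shows "((\<lambda>w. h w + cnj (g w) + ((1 - w * cnj w) / 2) * (w * hp w + cnj w * cnj (gp w))) has_derivative
     (\<lambda>v. (hp a - cnj a * S / 2 + (1 - a * cnj a) / 2 * (hp a + a * hpp a)) * v
        + (cnj (gp a) - a * S / 2 + (1 - a * cnj a) / 2 * (cnj (gp a) + cnj a * cnj (gpp a))) * cnj v)) (at a)"
proof -
  have hd': "(h has_derivative (\<lambda>v. hp a * v)) (at a)" using hd by (simp add: has_field_derivative_def)
  have gd': "(g has_derivative (\<lambda>v. gp a * v)) (at a)" using gd by (simp add: has_field_derivative_def)
  have hpd': "(hp has_derivative (\<lambda>v. hpp a * v)) (at a)" using hpd by (simp add: has_field_derivative_def)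
  have gpd': "(gp has_derivative (\<lambda>v. gpp a * v)) (at a)" using gpd by (simp add: has_field_derivative_def)
  show ?thesis
    apply (rule has_derivative_eq_rhs)
     apply (auto intro!: derivative_eq_intros hd' gd' hpd' gpd')[1]
    apply (rule ext)
    apply (simp add: S_def field_simps)
    done
qed

lemma est1:
  fixes a P Q P2 :: complex and \<rho> :: real
  assumes na: "norm a \<le> 1" and r0: "0 \<le> \<rho>" "\<rho> \<le> 1"
    and b1: "\<rho> * norm P \<le> 36" "\<rho> * norm Q \<le> 36" "\<rho>^2 * norm P2 \<le> 11952"
    and nS: "norm S \<le> norm P + norm Q" and that: "norm c \<le> 1"
  shows "\<rho> * norm (P - c * S / 2 + of_real \<rho> / 2 * (P + a * P2)) \<le> 6100"
proof -
  have "norm (P - c * S / 2 + of_real \<rho> / 2 * (P + a * P2))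
      \<le> norm P + norm (c * S / 2) + norm (of_real \<rho> / 2 * (P + a * P2))"
  proof -
    have "norm (P - c * S / 2 + of_real \<rho> / 2 * (P + a * P2)) \<le> norm (P - c * S / 2) + norm (of_real \<rho> / 2 * (P + a * P2))"
      by (rule norm_triangle_ineq)
    moreover have "norm (P - c * S / 2) \<le> norm P + norm (c * S / 2)" by (rule norm_triangle_ineq4)
    ultimately show ?thesis by linarith
  qed
  also have "norm (c * S / 2) \<le> norm S / 2"
  proof -
    have "norm c * norm S \<le> norm S" using that by (simp add: mult_left_le_one_le)
    then show ?thesis by (simp add: norm_mult norm_divide)
  qed
  also have "norm (of_real \<rho> / 2 * (P + a * P2)) \<le> \<rho> / 2 * (norm P + norm P2)"
  proof -
    have "norm (P + a * P2) \<le> norm P + norm P2"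
    proof -
      have "norm (a * P2) \<le> norm P2" using na by (simp add: norm_mult mult_left_le_one_le)
      then show ?thesis using norm_triangle_ineq[of P "a * P2"] by linarith
    qed
    then show ?thesis using r0 by (simp add: norm_mult norm_divide mult_left_mono)
  qed
  finally have nA: "norm (P - c * S / 2 + of_real \<rho> / 2 * (P + a * P2)) \<le> norm P + norm S / 2 + \<rho> / 2 * (norm P + norm P2)"
    by simp
  have "\<rho> * norm (P - c * S / 2 + of_real \<rho> / 2 * (P + a * P2)) \<le> \<rho> * (norm P + norm S / 2 + \<rho> / 2 * (norm P + norm P2))"
    using nA r0 by (simp add: mult_left_mono)
  also have "\<dots> = \<rho> * norm P + (\<rho> * norm S) / 2 + (\<rho> * (\<rho> * norm P)) / 2 + (\<rho>^2 * norm P2) / 2"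
    by (simp add: algebra_simps power2_eq_square)
  also have "\<dots> \<le> 36 + (36 + 36) / 2 + 36 / 2 + 11952 / 2"
  proof -
    have "\<rho> * norm S \<le> \<rho> * norm P + \<rho> * norm Q" using mult_left_mono[OF nS r0(1)] by (simp add: distrib_left)
    moreover have "\<rho> * (\<rho> * norm P) \<le> \<rho> * norm P" using r0 by (simp add: mult_left_le_one_le)
    ultimately show ?thesis using b1 by argo
  qed
  finally show ?thesis by simp
qed


theorem corollary4:
  fixes H u :: "complex \<Rightarrow> complex"
  assumes "harmonic_on H (ball 0 1)"
    and "\<And>z. u z = H z + of_real ((1 - (norm z)\<^sup>2) / 2) * (z * dz H z + cnj z * dzbar H z)"
    and "u ` ball 0 1 \<subseteq> ball 0 1"
  shows "\<exists>c::real. 0 < c \<and>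
           (\<forall>z\<in>ball 0 1. (1 - (norm z)\<^sup>2) * (norm (dz u z) + norm (dzbar u z)) \<le> c)"
proof -
  let ?B = "ball (0::complex) 1"
  obtain h g hp gp hpp gpp :: "complex \<Rightarrow> complex" where
    D1: "\<And>w. w \<in> ?B \<Longrightarrow> (h has_field_derivative hp w) (at w)" and
    D2: "\<And>w. w \<in> ?B \<Longrightarrow> (hp has_field_derivative hpp w) (at w)" and
    D3: "\<And>w. w \<in> ?B \<Longrightarrow> (g has_field_derivative gp w) (at w)" and
    D4: "\<And>w. w \<in> ?B \<Longrightarrow> (gp has_field_derivative gpp w) (at w)" and
    D5: "\<And>w. w \<in> ?B \<Longrightarrow> H w = h w + cnj (g w)" and
    D6: "\<And>w. w \<in> ?B \<Longrightarrow> dz H w = hp w" and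
    D7: "\<And>w. w \<in> ?B \<Longrightarrow> dzbar H w = cnj (gp w)"
    by (rule decomp[OF assms(1)]) (rule that, assumption+)
  have ueq: "u w = h w + cnj (g w) + of_real ((1 - (norm w)\<^sup>2) / 2) * (w * hp w + cnj w * cnj (gp w))"
    if "w \<in> ?B" for w
    using assms(2)[of w] D5[OF that] D6[OF that] D7[OF that] by simp
  have ub: "norm (u w) < 1" if "w \<in> ?B" for w
  proof -
    have "u w \<in> ?B" using assms(3) that by blast
    then show ?thesis by simp
  qed
  have HB: "norm (h w + cnj (g w)) \<le> 1" if "w \<in> ?B" for w
    by (rule bound_H[OF D1 D3 ueq ub that])
  have main: "(1 - (norm a)\<^sup>2) * (norm (dz u a) + norm (dzbar u a)) \<le> 12200" if a: "a \<in> ?B" for a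
  proof -
    define r where "r = 1 - norm a"
    have r0: "r > 0" using a by (simp add: r_def)
    have sub: "ball a r \<subseteq> ?B"
    proof
      fix w assume "w \<in> ball a r"
      then have "norm (w - a) < r" by (simp add: dist_norm norm_minus_commute)
      moreover have "norm w \<le> norm a + norm (w - a)" using norm_triangle_ineq[of a "w - a"] by simp
      ultimately show "w \<in> ?B" by (simp add: r_def)
    qed
    have wB: "w \<in> ?B" if "w \<in> ball a r" for w using sub that by auto
    have p1: "((\<lambda>w. h w + g w) has_field_derivative hp w + gp w) (at w)" if "w \<in> ball a r" for w
      using D1[OF wB[OF that]] D3[OF wB[OF that]] by (rule DERIV_add)
    have p2: "((\<lambda>w. hp w + gp w) has_field_derivative hpp w + gpp w) (at w)" if "w \<in> ball a r" for w
      using D2[OF wB[OF that]] D4[OF wB[OF that]] by (rule DERIV_add)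
    have p3: "\<bar>Re (h w + g w)\<bar> \<le> 1" if "w \<in> ball a r" for w
    proof -
      have "\<bar>Re (h w + cnj (g w))\<bar> \<le> 1" using HB[OF wB[OF that]] abs_Re_le_cmod order_trans by blast
      then show ?thesis by simp
    qed
    have q1: "((\<lambda>w. - \<i> * (h w - g w)) has_field_derivative - \<i> * (hp w - gp w)) (at w)" if "w \<in> ball a r" for w
      using D1[OF wB[OF that]] D3[OF wB[OF that]] by (auto intro!: derivative_eq_intros)
    have q2: "((\<lambda>w. - \<i> * (hp w - gp w)) has_field_derivative - \<i> * (hpp w - gpp w)) (at w)" if "w \<in> ball a r" for w
      using D2[OF wB[OF that]] D4[OF wB[OF that]] by (auto intro!: derivative_eq_intros)
    have q3: "\<bar>Re (- \<i> * (h w - g w))\<bar> \<le> 1" if "w \<in> ball a r" for w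
    proof -
      have "\<bar>Im (h w + cnj (g w))\<bar> \<le> 1" using HB[OF wB[OF that]] abs_Im_le_cmod order_trans by blast
      then show ?thesis by simp
    qed
    have F1: "norm (hp a + gp a) \<le> 18 / r \<and> norm (hpp a + gpp a) \<le> 2988 / r^2"
      using reF_bound[OF r0 p1 p2 p3] by simp
    have F2: "norm (- \<i> * (hp a - gp a)) \<le> 18 / r \<and> norm (- \<i> * (hpp a - gpp a)) \<le> 2988 / r^2"
      using reF_bound[OF r0 q1 q2 q3] by simp
    have half: "norm x \<le> K" if "norm (x + y) \<le> K" "norm (x - y) \<le> K" for x y :: complex and K :: real
    proof -
      have "2 * x = (x + y) + (x - y)" by simp
      then have "norm (2 * x) \<le> norm (x + y) + norm (x - y)" by (metis norm_triangle_ineq)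
      then show ?thesis using that by (simp add: norm_mult)
    qed
    have nm: "norm (- \<i> * z) = norm z" for z by (simp add: norm_mult)
    have bhp: "norm (hp a) \<le> 18 / r" using half[of "hp a" "gp a"] F1 F2 nm by simp
    have bgp: "norm (gp a) \<le> 18 / r" using half[of "gp a" "hp a"] F1 F2 nm
      by (simp add: add.commute norm_minus_commute)
    have bhpp: "norm (hpp a) \<le> 2988 / r^2" using half[of "hpp a" "gpp a"] F1 F2 nm by simp
    have bgpp: "norm (gpp a) \<le> 2988 / r^2" using half[of "gpp a" "hpp a"] F1 F2 nm
      by (simp add: add.commute norm_minus_commute)
    define \<rho> where "\<rho> = 1 - (norm a)\<^sup>2"
    have \<rho>r: "\<rho> = r * (1 + norm a)" by (simp add: \<rho>_def r_def algebra_simps power2_eq_square)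
    have na1: "norm a < 1" using a by simp
    have \<rho>0: "0 \<le> \<rho>" "\<rho> \<le> 1" "\<rho> \<le> 2 * r"
    proof -
      show "0 \<le> \<rho>" unfolding \<rho>r using r0 by simp
      show "\<rho> \<le> 1" by (simp add: \<rho>_def)
      have "r * (1 + norm a) \<le> r * 2" using r0 na1 by (intro mult_left_mono) auto
      then show "\<rho> \<le> 2 * r" unfolding \<rho>r by simp
    qed
    have k1: "\<rho> * norm x \<le> 36" if "norm x \<le> 18 / r" for x
    proof -
      have "\<rho> * norm x \<le> (2 * r) * (18 / r)" using that \<rho>0 by (intro mult_mono) auto
      then show ?thesis using r0 by simp
    qed
    have k2: "\<rho>^2 * norm x \<le> 11952" if "norm x \<le> 2988 / r^2" for x
    proof -
      have "\<rho>^2 \<le> (2 * r)^2" using \<rho>0 by (intro power_mono) auto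
      then have "\<rho>^2 * norm x \<le> (2 * r)^2 * (2988 / r^2)" using that \<rho>0 by (intro mult_mono) auto
      then show ?thesis using r0 by (simp add: power_mult_distrib)
    qed
    define U where "U w = h w + cnj (g w) + ((1 - w * cnj w) / 2) * (w * hp w + cnj w * cnj (gp w))" for w
    have uU: "u w = U w" if "w \<in> ?B" for w
    proof -
      have "of_real ((1 - (norm w)\<^sup>2) / 2) = (1 - w * cnj w) / (2::complex)"
        unfolding complex_norm_square[symmetric] by simp
      then show ?thesis using ueq[OF that] by (simp add: U_def)
    qed
    define S where "S = a * hp a + cnj a * cnj (gp a)"
    define A where "A = hp a - cnj a * S / 2 + (1 - a * cnj a) / 2 * (hp a + a * hpp a)"
    define B where "B = cnj (gp a) - a * S / 2 + (1 - a * cnj a) / 2 * (cnj (gp a) + cnj a * cnj (gpp a))"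
    have Ud: "(U has_derivative (\<lambda>v. A * v + B * cnj v)) (at a)"
      unfolding U_def[abs_def] A_def B_def S_def by (rule U_deriv[where h=h and g=g and hp=hp and gp=gp and hpp=hpp and gpp=gpp and a=a, OF D1[OF a] D3[OF a] D2[OF a] D4[OF a]])
    have Udiff: "U differentiable (at a)" using Ud by (auto simp: differentiable_def)
    have fe0: "frechet_derivative U (at a) = frechet_derivative u (at a)"
      using frechet_derivative_transform_within_open[of U a ?B u] Udiff a uU by simp
    have fe: "frechet_derivative u (at a) = frechet_derivative U (at a)" using fe0 by simp
    have dzu: "dz u a = A" "dzbar u a = B"
    proof -
      have "dz U a = A" "dzbar U a = B" using dz_of[OF Ud] by auto
      then show "dz u a = A" "dzbar u a = B" by (simp_all add: dz_def dzbar_def dx_def dy_def fe)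
    qed
    have rc: "1 - a * cnj a = of_real \<rho>" unfolding \<rho>_def complex_norm_square[symmetric] by simp
    have nS: "norm S \<le> norm (hp a) + norm (gp a)"
    proof -
      have "norm S \<le> norm (a * hp a) + norm (cnj a * cnj (gp a))" unfolding S_def by (rule norm_triangle_ineq)
      moreover have "norm (a * hp a) \<le> norm (hp a)" using a by (simp add: norm_mult mult_left_le_one_le)
      moreover have "norm (cnj a * cnj (gp a)) \<le> norm (gp a)" using a by (simp add: norm_mult mult_left_le_one_le)
      ultimately show ?thesis by linarith
    qed
    have na: "norm a \<le> 1" "norm (cnj a) \<le> 1" using a by auto
    have eA: "\<rho> * norm A \<le> 6100"
      unfolding A_def rc
      by (rule est1[OF na(1) \<rho>0(1,2) k1[OF bhp] k1[OF bgp] k2[OF bhpp] nS na(2)])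
    have eB: "\<rho> * norm B \<le> 6100"
    proof -
      have nS': "norm S \<le> norm (cnj (gp a)) + norm (cnj (hp a))" using nS by simp
      show ?thesis
        unfolding B_def rc
        by (rule est1[OF na(2) \<rho>0(1,2) _ _ _ nS' na(1)]) (use k1[OF bgp] k1[OF bhp] k2[OF bgpp] in auto)
    qed
    show ?thesis using eA eB unfolding dzu \<rho>_def[symmetric] by (simp add: distrib_left)
  qed
  show ?thesis by (rule exI[of _ 12200]) (use main in auto)
qed


end
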